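(* Let $n_1,\ldots,n_N$ be positive integers and let $\mathbf{R}=(R_1,\ldots,R_N)\in\mathcal{A}^{(n_1,\ldots,n_N)}$. Then the Taylor joint spectrum $\sigma_T(\mathbf{R})$ of the commuting family of operators $(R_k)_{ij}$, $k=1,\ldots,N$, $i,j=1,\ldots,n_k$ (regarded as a subset of $\mathbb{C}^{n_1\times n_1}\times\cdots\times\mathbb{C}^{n_N\times n_N}$) satisfies $$\sigma_T(\mathbf{R})\subset\Pi^{n_1\times n_1}\times\cdots\times\Pi^{n_N\times n_N}.$$
   Context: For a positive integer $n$, $\Pi^{n\times n}:=\{M\in\mathbb{C}^{n\times n}: M+M^*>0\}$. $\mathcal{A}^{(n_1,\ldots,n_N)}$ denotes the class of $N$-tuples $\mathbf{R}=(R_1,\ldots,R_N)$ where, for some Hilbert space $\mathcal{H}_\mathbf{R}$ and some commutative algebra $\mathcal{B}_\mathbf{R}\subset L(\mathcal{H}_\mathbf{R})$, each $R_k$ is an $n_k\times n_k$ matrix with entries $(R_k)_{ij}\in\mathcal{B}_\mathbf{R}$ (regarded as an operator on $\mathbb{C}^{n_k}\otimes\mathcal{H}_\mathbf{R}$), and there is a real constant $s_\mathbf{R}>0$ with $R_k+R_k^*\geq s_\mathbf{R}I_{\mathbb{C}^{n_k}\otimes\mathcal{H}_\mathbf{R}}$ for $k=1,\ldots,N$. *)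

theory Defs
  imports "HOL-Analysis.Analysis"
begin

text \<open>The carrier is a type 'h with its additive group structure; complex scalar
multiplication sm and the inner product ip (linear in the first argument) are
explicit parameters.\<close>

definition hnorm :: "('h \<Rightarrow> 'h \<Rightarrow> complex) \<Rightarrow> 'h \<Rightarrow> real" where
  "hnorm ip x = sqrt (Re (ip x x))"

definition hilbert_space ::
  "(complex \<Rightarrow> 'h::ab_group_add \<Rightarrow> 'h) \<Rightarrow> ('h \<Rightarrow> 'h \<Rightarrow> complex) \<Rightarrow> bool" where
  "hilbert_space sm ip \<longleftrightarrow>
     (\<forall>x. sm 1 x = x) \<and>
     (\<forall>a b x. sm a (sm b x) = sm (a * b) x) \<and>
     (\<forall>a x y. sm a (x + y) = sm a x + sm a y) \<and>
     (\<forall>a b x. sm (a + b) x = sm a x + sm b x) \<and>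
     (\<forall>x y z. ip (x + y) z = ip x z + ip y z) \<and>
     (\<forall>a x y. ip (sm a x) y = a * ip x y) \<and>
     (\<forall>x y. ip y x = cnj (ip x y)) \<and>
     (\<forall>x. Im (ip x x) = 0 \<and> Re (ip x x) \<ge> 0) \<and>
     (\<forall>x. ip x x = 0 \<longrightarrow> x = 0) \<and>
     (\<forall>X :: nat \<Rightarrow> 'h.
        (\<forall>e>0. \<exists>M. \<forall>m\<ge>M. \<forall>k\<ge>M. hnorm ip (X m - X k) < e) \<longrightarrow>
        (\<exists>L. (\<lambda>m. hnorm ip (X m - L)) \<longlonglongrightarrow> 0))"

definition bounded_op ::
  "(complex \<Rightarrow> 'h::ab_group_add \<Rightarrow> 'h) \<Rightarrow> ('h \<Rightarrow> 'h \<Rightarrow> complex) \<Rightarrow> ('h \<Rightarrow> 'h) \<Rightarrow> bool" where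
  "bounded_op sm ip A \<longleftrightarrow>
     (\<forall>x y. A (x + y) = A x + A y) \<and>
     (\<forall>c x. A (sm c x) = sm c (A x)) \<and>
     (\<exists>C. \<forall>x. hnorm ip (A x) \<le> C * hnorm ip x)"

definition hadj :: "('h \<Rightarrow> 'h \<Rightarrow> complex) \<Rightarrow> ('h \<Rightarrow> 'h) \<Rightarrow> ('h \<Rightarrow> 'h)" where
  "hadj ip A = (THE B. \<forall>x y. ip (A x) y = ip x (B y))"

definition comm_op_algebra ::
  "(complex \<Rightarrow> 'h::ab_group_add \<Rightarrow> 'h) \<Rightarrow> ('h \<Rightarrow> 'h \<Rightarrow> complex) \<Rightarrow> ('h \<Rightarrow> 'h) set \<Rightarrow> bool" where
  "comm_op_algebra sm ip B \<longleftrightarrow>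
     B \<subseteq> {A. bounded_op sm ip A} \<and>
     (\<lambda>x. 0) \<in> B \<and>
     (\<forall>A\<in>B. \<forall>C\<in>B. (\<lambda>x. A x + C x) \<in> B) \<and>
     (\<forall>c. \<forall>A\<in>B. (\<lambda>x. sm c (A x)) \<in> B) \<and>
     (\<forall>A\<in>B. \<forall>C\<in>B. A \<circ> C \<in> B) \<and>
     (\<forall>A\<in>B. \<forall>C\<in>B. A \<circ> C = C \<circ> A)"

text \<open>An n x n operator matrix M (entries M i j, i,j < n) acts on
C^n \<otimes> H = H^n, whose elements are x with components x i, i < n.\<close>

definition opmat_apply :: "nat \<Rightarrow> (nat \<Rightarrow> nat \<Rightarrow> 'h \<Rightarrow> 'h::ab_group_add) \<Rightarrow> (nat \<Rightarrow> 'h) \<Rightarrow> nat \<Rightarrow> 'h" where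
  "opmat_apply n M x = (\<lambda>i. \<Sum>j<n. M i j (x j))"

definition opmat_adj :: "('h \<Rightarrow> 'h \<Rightarrow> complex) \<Rightarrow> (nat \<Rightarrow> nat \<Rightarrow> 'h \<Rightarrow> 'h) \<Rightarrow> nat \<Rightarrow> nat \<Rightarrow> 'h \<Rightarrow> 'h" where
  "opmat_adj ip M = (\<lambda>i j. hadj ip (M j i))"

definition opmat_add :: "(nat \<Rightarrow> nat \<Rightarrow> 'h \<Rightarrow> 'h::ab_group_add) \<Rightarrow> (nat \<Rightarrow> nat \<Rightarrow> 'h \<Rightarrow> 'h) \<Rightarrow> nat \<Rightarrow> nat \<Rightarrow> 'h \<Rightarrow> 'h" where
  "opmat_add M M' = (\<lambda>i j x. M i j x + M' i j x)"

definition ip_n :: "('h \<Rightarrow> 'h \<Rightarrow> complex) \<Rightarrow> nat \<Rightarrow> (nat \<Rightarrow> 'h) \<Rightarrow> (nat \<Rightarrow> 'h) \<Rightarrow> complex" where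
  "ip_n ip n x y = (\<Sum>i<n. ip (x i) (y i))"

definition opmat_ge_scalar ::
  "('h::ab_group_add \<Rightarrow> 'h \<Rightarrow> complex) \<Rightarrow> nat \<Rightarrow> (nat \<Rightarrow> nat \<Rightarrow> 'h \<Rightarrow> 'h) \<Rightarrow> real \<Rightarrow> bool" where
  "opmat_ge_scalar ip n M s \<longleftrightarrow>
     (\<forall>x :: nat \<Rightarrow> 'h.
        Im (ip_n ip n (opmat_apply n M x) x - of_real s * ip_n ip n x x) = 0 \<and>
        Re (ip_n ip n (opmat_apply n M x) x - of_real s * ip_n ip n x x) \<ge> 0)"

text \<open>The class A^{(n_1,...,n_N)} (for a fixed Hilbert space H).  The tuple R is
R k i j = (R_k)_{ij} for k < N and i, j < n k (indices 0-based).\<close>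
definition class_A ::
  "(complex \<Rightarrow> 'h::ab_group_add \<Rightarrow> 'h) \<Rightarrow> ('h \<Rightarrow> 'h \<Rightarrow> complex) \<Rightarrow> nat \<Rightarrow> (nat \<Rightarrow> nat)
     \<Rightarrow> (nat \<Rightarrow> nat \<Rightarrow> nat \<Rightarrow> 'h \<Rightarrow> 'h) \<Rightarrow> bool" where
  "class_A sm ip N n R \<longleftrightarrow>
     hilbert_space sm ip \<and>
     (\<exists>B. comm_op_algebra sm ip B \<and>
          (\<forall>k<N. \<forall>i<n k. \<forall>j<n k. R k i j \<in> B)) \<and>
     (\<exists>s::real. s > 0 \<and>
        (\<forall>k<N. opmat_ge_scalar ip (n k) (opmat_add (R k) (opmat_adj ip (R k))) s))"

text \<open>For a commuting family T j (j in a finite index set I with a strict linear order lt) on X,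
the Koszul complex has chain space \<Lambda>(C^I) \<otimes> X, represented as functions
f from subsets S of I to X (f S = coefficient of e_S; f S = 0 unless S \<subseteq> I).\<close>

definition koszul_chains :: "'i set \<Rightarrow> ('i set \<Rightarrow> 'h::zero) set" where
  "koszul_chains I = {f. \<forall>S. \<not> S \<subseteq> I \<longrightarrow> f S = 0}"

definition koszul_d ::
  "('i \<Rightarrow> 'i \<Rightarrow> bool) \<Rightarrow> 'i set \<Rightarrow> ('i \<Rightarrow> 'h \<Rightarrow> 'h::ab_group_add) \<Rightarrow> ('i set \<Rightarrow> 'h) \<Rightarrow> 'i set \<Rightarrow> 'h" where
  "koszul_d lt I T f = (\<lambda>S. if S \<subseteq> I then
      (\<Sum>j\<in>I - S. (if even (card {i\<in>S. lt i j}) then T j (f (insert j S))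
                    else - T j (f (insert j S))))
     else 0)"

text \<open>Exactness of the Koszul complex (in every degree; d is homogeneous).\<close>
definition koszul_exact :: "('i \<Rightarrow> 'i \<Rightarrow> bool) \<Rightarrow> 'i set \<Rightarrow> ('i \<Rightarrow> 'h \<Rightarrow> 'h::ab_group_add) \<Rightarrow> bool" where
  "koszul_exact lt I T \<longleftrightarrow>
     (\<forall>f\<in>koszul_chains I. (\<forall>S. koszul_d lt I T f S = 0) \<longrightarrow>
        (\<exists>g\<in>koszul_chains I. f = koszul_d lt I T g))"

definition taylor_spectrum ::
  "(complex \<Rightarrow> 'h::ab_group_add \<Rightarrow> 'h) \<Rightarrow> ('i \<Rightarrow> 'i \<Rightarrow> bool) \<Rightarrow> 'i set \<Rightarrow> ('i \<Rightarrow> 'h \<Rightarrow> 'h) \<Rightarrow> ('i \<Rightarrow> complex) set" where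
  "taylor_spectrum sm lt I T =
     {z. (\<forall>j. j \<notin> I \<longrightarrow> z j = 0) \<and>
          \<not> koszul_exact lt I (\<lambda>j x. T j x - sm (z j) x)}"

definition idx_set :: "nat \<Rightarrow> (nat \<Rightarrow> nat) \<Rightarrow> (nat \<times> nat \<times> nat) set" where
  "idx_set N n = {(k, i, j). k < N \<and> i < n k \<and> j < n k}"

text \<open>Lexicographic strict order on index triples (used only to fix the signs
of the Koszul complex; the spectrum does not depend on this choice).\<close>
definition lex3 :: "nat \<times> nat \<times> nat \<Rightarrow> nat \<times> nat \<times> nat \<Rightarrow> bool" where
  "lex3 = (\<lambda>(k, i, j) (k', i', j'). k < k' \<or> (k = k' \<and> (i < i' \<or> (i = i' \<and> j < j'))))"

definition flat_family :: "(nat \<Rightarrow> nat \<Rightarrow> nat \<Rightarrow> 'h \<Rightarrow> 'h) \<Rightarrow> nat \<times> nat \<times> nat \<Rightarrow> 'h \<Rightarrow> 'h" where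
  "flat_family R = (\<lambda>(k, i, j). R k i j)"

definition Pi_mat :: "nat \<Rightarrow> (nat \<Rightarrow> nat \<Rightarrow> complex) \<Rightarrow> bool" where
  "Pi_mat n M \<longleftrightarrow>
     (\<forall>v :: nat \<Rightarrow> complex. (\<exists>i<n. v i \<noteq> 0) \<longrightarrow>
        Re (\<Sum>i<n. \<Sum>j<n. cnj (v i) * (M i j + cnj (M j i)) * v j) > 0)"

end

theory Submission
  imports Defs
begin


locale hs =
  fixes sm :: "complex \<Rightarrow> 'h::ab_group_add \<Rightarrow> 'h" and ip :: "'h \<Rightarrow> 'h \<Rightarrow> complex"
  assumes H: "hilbert_space sm ip"
begin

lemmas Hc = H[unfolded hilbert_space_def]

lemma sm_one[simp]: "sm 1 x = x" using Hc[THEN conjunct1] by blast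
lemma sm_sm: "sm a (sm b x) = sm (a * b) x" using Hc[THEN conjunct2, THEN conjunct1] by blast
lemma sm_add_right: "sm a (x + y) = sm a x + sm a y" using Hc[THEN conjunct2, THEN conjunct2, THEN conjunct1] by blast
lemma sm_add_left: "sm (a + b) x = sm a x + sm b x" using Hc[THEN conjunct2, THEN conjunct2, THEN conjunct2, THEN conjunct1] by blast
lemma ip_add_left: "ip (x + y) z = ip x z + ip y z" using Hc[THEN conjunct2, THEN conjunct2, THEN conjunct2, THEN conjunct2, THEN conjunct1] by blast
lemma ip_sm_left: "ip (sm a x) y = a * ip x y" using Hc[THEN conjunct2, THEN conjunct2, THEN conjunct2, THEN conjunct2, THEN conjunct2, THEN conjunct1] by blast
lemma ip_conj: "ip y x = cnj (ip x y)" using Hc[THEN conjunct2, THEN conjunct2, THEN conjunct2, THEN conjunct2, THEN conjunct2, THEN conjunct2, THEN conjunct1] by blast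
lemma ip_self_Im: "Im (ip x x) = 0" using Hc[THEN conjunct2, THEN conjunct2, THEN conjunct2, THEN conjunct2, THEN conjunct2, THEN conjunct2, THEN conjunct2, THEN conjunct1] by blast
lemma ip_self_Re: "Re (ip x x) \<ge> 0" using Hc[THEN conjunct2, THEN conjunct2, THEN conjunct2, THEN conjunct2, THEN conjunct2, THEN conjunct2, THEN conjunct2, THEN conjunct1] by blast
lemma ip_self_zero: "ip x x = 0 \<Longrightarrow> x = 0" using Hc[THEN conjunct2, THEN conjunct2, THEN conjunct2, THEN conjunct2, THEN conjunct2, THEN conjunct2, THEN conjunct2, THEN conjunct2, THEN conjunct1] by blast
lemma complete: "(\<forall>e>0. \<exists>M. \<forall>m\<ge>M. \<forall>k\<ge>M. hnorm ip (X m - X k) < e) \<Longrightarrow>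
        (\<exists>L. (\<lambda>m. hnorm ip (X m - L)) \<longlonglongrightarrow> 0)" using Hc[THEN conjunct2, THEN conjunct2, THEN conjunct2, THEN conjunct2, THEN conjunct2, THEN conjunct2, THEN conjunct2, THEN conjunct2, THEN conjunct2] by blast

lemma sm_zero_left[simp]: "sm 0 x = 0"
  using sm_add_left[of 0 0 x] by simp
lemma sm_zero_right[simp]: "sm a 0 = 0"
  using sm_add_right[of a 0 0] by simp
lemma sm_minus_right: "sm a (- x) = - sm a x"
  using sm_add_right[of a x "-x"] minus_unique[of "sm a x" "sm a (-x)"] by simp
lemma sm_diff_right: "sm a (x - y) = sm a x - sm a y"
  using sm_add_right[of a x "-y"] by (simp add: sm_minus_right)
lemma sm_minus_left: "sm (- a) x = - sm a x"
  using sm_add_left[of a "-a" x] minus_unique[of "sm a x" "sm (-a) x"] by simp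
lemma sm_diff_left: "sm (a - b) x = sm a x - sm b x"
  using sm_add_left[of a "-b" x] by (simp add: sm_minus_left)
lemma sm_sum_right: "sm a (sum f A) = (\<Sum>i\<in>A. sm a (f i))"
  by (induction A rule: infinite_finite_induct) (auto simp: sm_add_right)
lemma sm_sum_left: "sm (sum f A) x = (\<Sum>i\<in>A. sm (f i) x)"
  by (induction A rule: infinite_finite_induct) (auto simp: sm_add_left)
lemma sm_comm: "sm a (sm b x) = sm b (sm a x)"
  by (simp add: sm_sm mult.commute)

lemma ip_zero_left[simp]: "ip 0 y = 0"
  using ip_add_left[of 0 0 y] by simp
lemma ip_zero_right[simp]: "ip y 0 = 0"
  using ip_conj[of 0 y] by simp
lemma ip_add_right: "ip z (x + y) = ip z x + ip z y"
proof -
  have "ip z (x+y) = cnj (ip (x+y) z)" by (rule ip_conj)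
  also have "\<dots> = cnj (ip x z) + cnj (ip y z)" by (simp add: ip_add_left)
  also have "\<dots> = ip z x + ip z y" by (simp add: ip_conj[of z x] ip_conj[of z y])
  finally show ?thesis .
qed
lemma ip_sm_right: "ip x (sm a y) = cnj a * ip x y"
proof -
  have "ip x (sm a y) = cnj (ip (sm a y) x)" by (rule ip_conj)
  also have "\<dots> = cnj a * cnj (ip y x)" by (simp add: ip_sm_left)
  also have "\<dots> = cnj a * ip x y" by (simp add: ip_conj[of x y])
  finally show ?thesis .
qed
lemma ip_minus_left: "ip (- x) y = - ip x y"
  using ip_add_left[of x "-x" y] minus_unique[of "ip x y" "ip (-x) y"] by simp
lemma ip_minus_right: "ip y (- x) = - ip y x"
  using ip_add_right[of y x "-x"] minus_unique[of "ip y x" "ip y (-x)"] by simp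
lemma ip_diff_left: "ip (x - y) z = ip x z - ip y z"
  using ip_add_left[of x "-y" z] by (simp add: ip_minus_left)
lemma ip_diff_right: "ip z (x - y) = ip z x - ip z y"
  using ip_add_right[of z x "-y"] by (simp add: ip_minus_right)
lemma ip_sum_left: "ip (sum f A) y = (\<Sum>i\<in>A. ip (f i) y)"
  by (induction A rule: infinite_finite_induct) (auto simp: ip_add_left)
lemma ip_sum_right: "ip y (sum f A) = (\<Sum>i\<in>A. ip y (f i))"
  by (induction A rule: infinite_finite_induct) (auto simp: ip_add_right)

abbreviation nrm where "nrm x \<equiv> hnorm ip x"

lemma nrm_nonneg: "nrm x \<ge> 0" using ip_self_Re[of x] by (simp add: hnorm_def)
lemma ip_self_real: "ip x x = of_real (Re (ip x x))"
  using ip_self_Im[of x] by (simp add: complex_eq_iff)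
lemma nrm_sq: "(nrm x)^2 = Re (ip x x)"
  using ip_self_Re[of x] by (simp add: hnorm_def)
lemma ip_self_nrm: "ip x x = of_real ((nrm x)^2)"
  using ip_self_real nrm_sq by simp
lemma nrm_zero_iff: "nrm x = 0 \<longleftrightarrow> x = 0"
proof
  assume "nrm x = 0" then have "ip x x = 0" using ip_self_nrm[of x] by simp
  then show "x = 0" by (rule ip_self_zero)
qed (simp add: hnorm_def)
lemma nrm_zero[simp]: "nrm 0 = 0" by (simp add: hnorm_def)

lemma nrm_sm: "nrm (sm a x) = cmod a * nrm x"
proof -
  have "ip (sm a x) (sm a x) = (a * cnj a) * ip x x" by (simp add: ip_sm_left ip_sm_right)
  then have "complex_of_real ((nrm (sm a x))^2) = complex_of_real ((cmod a)^2) * complex_of_real ((nrm x)^2)"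
    by (simp only: ip_self_nrm complex_norm_square)
  then have "(nrm (sm a x))^2 = (cmod a)^2 * (nrm x)^2"
    by (simp only: of_real_mult[symmetric] of_real_eq_iff)
  then have "(nrm (sm a x))^2 = ((cmod a) * nrm x)^2" by (simp add: power_mult_distrib)
  then show ?thesis using nrm_nonneg by (simp add: power2_eq_iff_nonneg)
qed

lemma nrm_minus: "nrm (- x) = nrm x"
  using nrm_sm[of "-1" x] by (simp add: sm_minus_left)

lemma nrm_sq_add: "(nrm (x + y))^2 = (nrm x)^2 + (nrm y)^2 + 2 * Re (ip x y)"
proof -
  have "ip (x+y) (x+y) = ip x x + ip y y + (ip x y + cnj (ip x y))"
    by (simp add: ip_add_left ip_add_right ip_conj[of y x] algebra_simps)
  then have "Re (ip (x+y) (x+y)) = Re (ip x x) + Re (ip y y) + 2 * Re (ip x y)" by simp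
  then show ?thesis by (simp add: nrm_sq)
qed

lemma nrm_sq_diff: "(nrm (x - y))^2 = (nrm x)^2 + (nrm y)^2 - 2 * Re (ip x y)"
  using nrm_sq_add[of x "-y"] by (simp add: nrm_minus ip_minus_right)

lemma cauchy_schwarz: "cmod (ip x y) \<le> nrm x * nrm y"
proof (cases "y = 0")
  case True then show ?thesis by simp
next
  case False
  define p where "p = ip x y"
  define t where "t = p / complex_of_real ((nrm y)^2)"
  have ny: "nrm y > 0" using False nrm_zero_iff nrm_nonneg by (metis less_eq_real_def)
  have e1: "Re (cnj t * p) = (cmod p)^2 / (nrm y)^2"
  proof -
    have "cnj t * p = (p * cnj p) / complex_of_real ((nrm y)^2)"
      by (simp add: t_def)
    also have "p * cnj p = complex_of_real ((cmod p)^2)" using complex_norm_square[of p] by simp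
    finally show ?thesis by (simp only: Re_divide_of_real Re_complex_of_real)
  qed
  have e2: "(cmod t)^2 * (nrm y)^2 = (cmod p)^2 / (nrm y)^2"
  proof -
    have "cmod t = cmod p / (nrm y)^2" using ny by (simp add: t_def norm_divide norm_power)
    then show ?thesis using ny by (simp add: field_simps power2_eq_square)
  qed
  have "0 \<le> (nrm (x - sm t y))^2" by simp
  also have "\<dots> = (nrm x)^2 + (nrm (sm t y))^2 - 2 * Re (cnj t * p)"
    by (simp add: nrm_sq_diff ip_sm_right p_def)
  also have "(nrm (sm t y))^2 = (cmod t)^2 * (nrm y)^2" by (simp add: nrm_sm power_mult_distrib)
  finally have "(cmod p)^2 / (nrm y)^2 \<le> (nrm x)^2" using e1 e2 by simp
  then have "(cmod p)^2 \<le> (nrm x * nrm y)^2" using ny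
    by (simp add: divide_le_eq power_mult_distrib)
  then show ?thesis using nrm_nonneg unfolding p_def
    by (meson mult_nonneg_nonneg power2_le_imp_le)
qed

lemma nrm_triangle: "nrm (x + y) \<le> nrm x + nrm y"
proof -
  have "Re (ip x y) \<le> nrm x * nrm y"
    using cauchy_schwarz[of x y] complex_Re_le_cmod order_trans by blast
  then have "(nrm (x+y))^2 \<le> (nrm x + nrm y)^2"
    by (simp add: nrm_sq_add power2_sum)
  then show ?thesis using nrm_nonneg by (meson add_nonneg_nonneg power2_le_imp_le)
qed

lemma nrm_diff_triangle: "nrm (x - y) \<le> nrm x + nrm y"
  using nrm_triangle[of x "-y"] by (simp add: nrm_minus)

lemma nrm_sum: "nrm (sum f A) \<le> (\<Sum>i\<in>A. nrm (f i))"
proof (induction A rule: infinite_finite_induct)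
  case (insert a A)
  then show ?case using nrm_triangle[of "f a" "sum f A"] by simp
qed auto

lemma nrm_rev_triangle: "\<bar>nrm x - nrm y\<bar> \<le> nrm (x - y)"
proof -
  have "nrm x \<le> nrm (x - y) + nrm y" using nrm_triangle[of "x - y" y] by simp
  moreover have "nrm y \<le> nrm (x - y) + nrm x" using nrm_triangle[of "y - x" x] nrm_minus[of "x - y"] by simp
  ultimately show ?thesis by linarith
qed

end


lemma lin_diff:
  fixes P :: "'a::ab_group_add \<Rightarrow> 'b::ab_group_add"
  assumes "\<forall>x y. P (x + y) = P x + P y"
  shows "P (x - y) = P x - P y"
proof -
  have "P x = P (x - y) + P y" using assms[rule_format, of "x - y" y] by simp
  then show ?thesis by (metis add_diff_cancel)
qed

lemma lin_zero:
  fixes P :: "'a::ab_group_add \<Rightarrow> 'b::ab_group_add"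
  assumes "\<forall>x y. P (x + y) = P x + P y"
  shows "P 0 = 0"
  using assms[rule_format, of 0 0] by simp


context hs begin

lemma parallelogram: "(nrm (p + q))^2 + (nrm (p - q))^2 = 2 * (nrm p)^2 + 2 * (nrm q)^2"
  by (simp add: nrm_sq_add nrm_sq_diff)

lemma minimize:
  assumes Padd: "\<forall>x y. P (x+y) = P x + P y" and Psm: "\<forall>c x. P (sm c x) = sm c (P x)"
    and dpos: "\<delta> > 0" and Plow: "\<forall>x. \<delta> * nrm x \<le> nrm (P x)" and Pup: "\<forall>x. nrm (P x) \<le> C * nrm x"
    and fadd: "\<forall>x y. f (x+y) = f x + f y" and fsm: "\<forall>c x. f (sm c x) = c * f x"
    and fb: "\<forall>x. cmod (f x) \<le> D * nrm x"
  shows "\<exists>b. \<forall>u. ip (P u) (P b) = f u"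
proof -
  define J where "J x = (nrm (P x))^2 - 2 * Re (f x)" for x
  have Jlow: "J x \<ge> - (D^2 / \<delta>^2)" for x
  proof -
    have a: "(\<delta> * nrm x)^2 \<le> (nrm (P x))^2"
      using Plow nrm_nonneg dpos by (simp add: power_mono)
    have b: "Re (f x) \<le> D * nrm x" using fb complex_Re_le_cmod order_trans by blast
    have c: "0 \<le> (\<delta> * nrm x - D / \<delta>)^2" by simp
    have "(\<delta> * nrm x - D / \<delta>)^2 = (\<delta> * nrm x)^2 - 2 * D * nrm x + D^2/\<delta>^2"
      using dpos by (simp add: power2_diff field_simps power2_eq_square)
    then show ?thesis using a b c unfolding J_def by linarith
  qed
  define m where "m = Inf (range J)"
  have bdd: "bdd_below (range J)" using Jlow by (meson bdd_belowI2)
  have m_le: "m \<le> J x" for x unfolding m_def using bdd by (simp add: cInf_lower)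
  have "\<exists>x. J x < m + 1 / (real k + 1)" for k :: nat
  proof -
    have "Inf (range J) < m + 1 / (real k + 1)" unfolding m_def by (simp add: add_pos_pos)
    then show ?thesis using cInf_lessD[of "range J"] by blast
  qed
  then obtain X where X: "\<And>k. J (X k) < m + 1 / (real k + 1)" by metis
  have para: "J a + J b = 2 * J (sm (1/2) (a + b)) + (nrm (P (a - b)))^2 / 2" for a b
  proof -
    have "P (sm (1/2) (a + b)) = sm (1/2) (P a + P b)" using Padd Psm by simp
    then have n1: "(nrm (P (sm (1/2) (a + b))))^2 = (nrm (P a + P b))^2 / 4"
      by (simp add: nrm_sm power_mult_distrib power2_eq_square)
    have f1: "Re (f (sm (1/2) (a + b))) = (Re (f a) + Re (f b)) / 2" using fadd fsm by simp
    have "P (a - b) = P a - P b" using lin_diff[OF Padd] .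
    then show ?thesis unfolding J_def using n1 f1 parallelogram[of "P a" "P b"] by simp
  qed
  have cauchy_step: "\<delta>^2 * (nrm (X a - X b))^2 \<le> 4 * (1/(real a + 1) + 1/(real b + 1))" for a b
  proof -
    have "(\<delta> * nrm (X a - X b))^2 \<le> (nrm (P (X a - X b)))^2"
      using Plow nrm_nonneg dpos by (simp add: power_mono)
    also have "\<dots> = 2 * (J (X a) + J (X b) - 2 * J (sm (1/2) (X a + X b)))"
      using para[of "X a" "X b"] by simp
    also have "\<dots> \<le> 2 * (J (X a) + J (X b) - 2 * m)"
      using m_le[of "sm (1/2) (X a + X b)"] by simp
    also have "\<dots> \<le> 4 * (1/(real a + 1) + 1/(real b + 1))"
    proof -
      have "1/(real a + 1) > 0" "1/(real b + 1) > 0" by simp_all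
      then show ?thesis using X[of a] X[of b] by (smt (verit))
    qed
    finally show ?thesis by (simp add: power_mult_distrib)
  qed
  have "\<forall>e>0. \<exists>M. \<forall>a\<ge>M. \<forall>b\<ge>M. nrm (X a - X b) < e"
  proof (intro allI impI)
    fix e :: real assume e: "e > 0"
    obtain M0 :: nat where M0: "8 / (\<delta>^2 * e^2) < real M0" using reals_Archimedean2 by blast
    define M where "M = M0"
    have M: "8 / (\<delta>^2 * e^2) < real M + 1" using M0 unfolding M_def by simp
    show "\<exists>M. \<forall>a\<ge>M. \<forall>b\<ge>M. nrm (X a - X b) < e"
    proof (intro exI allI impI)
      fix a b assume ab: "M \<le> a" "M \<le> b"
      have ia: "1/(real a + 1) \<le> 1/(real M + 1)" using ab by (simp add: frac_le)
      have ib: "1/(real b + 1) \<le> 1/(real M + 1)" using ab by (simp add: frac_le)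
      have "\<delta>^2 * (nrm (X a - X b))^2 \<le> 8 / (real M + 1)"
        using cauchy_step[of a b] ia ib by simp
      also have "\<dots> < \<delta>^2 * e^2"
        using M dpos e by (simp add: divide_less_eq mult.commute)
      finally have "(nrm (X a - X b))^2 < e^2" using dpos by simp
      then show "nrm (X a - X b) < e" using e power2_less_imp_less[of "nrm (X a - X b)" e] by simp
    qed
  qed
  then obtain L where L: "(\<lambda>k. nrm (X k - L)) \<longlonglongrightarrow> 0" using complete by blast
  have t1: "(\<lambda>k. nrm (P (X k))) \<longlonglongrightarrow> nrm (P L)"
  proof -
    have "(\<lambda>k. nrm (P (X k)) - nrm (P L)) \<longlonglongrightarrow> 0"
    proof (rule Lim_null_comparison)
      show "\<forall>\<^sub>F k in sequentially. norm (nrm (P (X k)) - nrm (P L)) \<le> C * nrm (X k - L)"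
      proof (intro always_eventually allI)
        fix k
        have "\<bar>nrm (P (X k)) - nrm (P L)\<bar> \<le> nrm (P (X k) - P L)" by (rule nrm_rev_triangle)
        also have "P (X k) - P L = P (X k - L)" using lin_diff[OF Padd] by simp
        finally show "norm (nrm (P (X k)) - nrm (P L)) \<le> C * nrm (X k - L)"
          using Pup by (simp add: order_trans)
      qed
      show "(\<lambda>k. C * nrm (X k - L)) \<longlonglongrightarrow> 0" using L by (simp add: tendsto_mult_right_zero)
    qed
    then show ?thesis by (simp add: Lim_null[symmetric])
  qed
  have t2: "(\<lambda>k. Re (f (X k))) \<longlonglongrightarrow> Re (f L)"
  proof -
    have "(\<lambda>k. Re (f (X k)) - Re (f L)) \<longlonglongrightarrow> 0"
    proof (rule Lim_null_comparison)
      show "\<forall>\<^sub>F k in sequentially. norm (Re (f (X k)) - Re (f L)) \<le> D * nrm (X k - L)"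
      proof (intro always_eventually allI)
        fix k
        have "Re (f (X k)) - Re (f L) = Re (f (X k - L))" using lin_diff[OF fadd] by simp
        also have "\<bar>\<dots>\<bar> \<le> cmod (f (X k - L))" by (rule abs_Re_le_cmod)
        finally show "norm (Re (f (X k)) - Re (f L)) \<le> D * nrm (X k - L)"
          using fb by (simp add: order_trans)
      qed
      show "(\<lambda>k. D * nrm (X k - L)) \<longlonglongrightarrow> 0" using L by (simp add: tendsto_mult_right_zero)
    qed
    then show ?thesis by (simp add: Lim_null[symmetric])
  qed
  have tJ: "(\<lambda>k. J (X k)) \<longlonglongrightarrow> J L"
    unfolding J_def by (intro tendsto_intros t1 t2)
  have tm: "(\<lambda>k. J (X k)) \<longlonglongrightarrow> m"
  proof -
    have "(\<lambda>k. J (X k) - m) \<longlonglongrightarrow> 0"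
    proof (rule Lim_null_comparison)
      show "\<forall>\<^sub>F k in sequentially. norm (J (X k) - m) \<le> inverse (real (Suc k))"
      proof (intro always_eventually allI)
        fix k
        show "norm (J (X k) - m) \<le> inverse (real (Suc k))"
          using X[of k] m_le[of "X k"] by (simp add: inverse_eq_divide add.commute)
      qed
      show "(\<lambda>k. inverse (real (Suc k))) \<longlonglongrightarrow> 0" by (rule LIMSEQ_inverse_real_of_nat)
    qed
    then show ?thesis by (simp add: Lim_null[symmetric])
  qed
  have JL: "J L = m" using LIMSEQ_unique[OF tJ tm] .
  show ?thesis
  proof (intro exI allI)
    fix u
    define g where "g = ip (P u) (P L) - f u"
    define A where "A = (nrm (P u))^2"
    have var: "0 \<le> (cmod t)^2 * A + 2 * Re (t * g)" for t
    proof -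
      have "m \<le> J (L + sm t u)" by (rule m_le)
      also have "J (L + sm t u) = (nrm (P L + sm t (P u)))^2 - 2 * Re (f L + t * f u)"
        unfolding J_def using Padd Psm fadd fsm by simp
      also have "\<dots> = J L + (cmod t)^2 * A + 2 * Re (cnj t * ip (P L) (P u)) - 2 * Re (t * f u)"
        unfolding J_def A_def by (simp add: nrm_sq_add nrm_sm ip_sm_right power_mult_distrib)
      also have "Re (cnj t * ip (P L) (P u)) = Re (t * ip (P u) (P L))"
        by (simp add: ip_conj[of "P u" "P L"] complex_cnj_mult[symmetric] del: complex_cnj_mult)
      finally show ?thesis using JL unfolding g_def by (simp add: algebra_simps)
    qed
    define e where "e = 1 / (A + 1)"
    have A0: "A \<ge> 0" unfolding A_def by simp
    have e0: "e > 0" unfolding e_def using A0 by simp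
    have eA: "e * A < 1" unfolding e_def using A0 by (simp add: field_simps)
    have v: "0 \<le> (cmod (of_real e * cnj g))^2 * A + 2 * Re (- (of_real e * cnj g) * g)"
      using var[of "- (of_real e * cnj g)"] by simp
    have "cnj g * g = of_real ((cmod g)^2)" using complex_norm_square[of g] by (simp add: mult.commute)
    then have "Re (- (of_real e * cnj g) * g) = - e * (cmod g)^2"
      by (simp add: mult.assoc)
    moreover have "(cmod (of_real e * cnj g))^2 = e^2 * (cmod g)^2"
      using e0 by (simp add: norm_mult power_mult_distrib)
    ultimately have "0 \<le> e^2 * (cmod g)^2 * A - 2 * e * (cmod g)^2" using v by simp
    then have "0 \<le> e * (e * A * (cmod g)^2 - 2 * (cmod g)^2)" by (simp add: algebra_simps power2_eq_square)
    then have "0 \<le> e * A * (cmod g)^2 - 2 * (cmod g)^2" using e0 by (simp add: zero_le_mult_iff)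
    moreover have "e * A * (cmod g)^2 \<le> (cmod g)^2"
      using mult_left_le_one_le[of "(cmod g)^2" "e*A"] eA e0 A0 by simp
    ultimately have "(cmod g)^2 \<le> 0" by linarith
    then have "g = 0" by simp
    then show "ip (P u) (P L) = f u" unfolding g_def by simp
  qed
qed

end


context hs begin

lemma adj_exists:
  assumes "bounded_op sm ip A"
  shows "\<exists>B. \<forall>x y. ip (A x) y = ip x (B y)"
proof -
  from assms obtain C where Aadd: "\<forall>x y. A (x + y) = A x + A y" and Asm: "\<forall>c x. A (sm c x) = sm c (A x)"
    and AC: "\<forall>x. nrm (A x) \<le> C * nrm x" unfolding bounded_op_def by blast
  have "\<exists>b. \<forall>u. ip u b = ip (A u) y" for y
  proof -
    have "\<exists>b. \<forall>u. ip (id u) (id b) = ip (A u) y"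
    proof (rule minimize[where \<delta>=1 and C=1 and D="C * nrm y"])
      show "\<forall>x. cmod (ip (A x) y) \<le> C * nrm y * nrm x"
      proof
        fix x
        have "cmod (ip (A x) y) \<le> nrm (A x) * nrm y" by (rule cauchy_schwarz)
        also have "\<dots> \<le> C * nrm x * nrm y" using AC nrm_nonneg by (simp add: mult_right_mono)
        finally show "cmod (ip (A x) y) \<le> C * nrm y * nrm x" by (simp add: mult_ac)
      qed
    qed (auto simp: Aadd Asm ip_add_left ip_sm_left)
    then show ?thesis by simp
  qed
  then obtain B where "\<forall>y u. ip u (B y) = ip (A u) y" by metis
  then show ?thesis by metis
qed

lemma hadj_prop:
  assumes "bounded_op sm ip A"
  shows "ip (A x) y = ip x (hadj ip A y)"
proof -
  obtain B where B: "\<forall>x y. ip (A x) y = ip x (B y)" using adj_exists[OF assms] by blast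
  have uniq: "B' = B" if B': "\<forall>x y. ip (A x) y = ip x (B' y)" for B'
  proof
    fix y
    have "ip u (B' y - B y) = 0" for u using B B' by (simp add: ip_diff_right)
    then show "B' y = B y" using ip_self_zero[of "B' y - B y"] by simp
  qed
  have "hadj ip A = B" unfolding hadj_def
    by (rule the_equality) (use B uniq in auto)
  then show ?thesis using B by simp
qed

lemma coercive_inv:
  assumes Uadd: "\<forall>x y. U (x+y) = U x + U y" and Usm: "\<forall>c x. U (sm c x) = sm c (U x)"
    and dpos: "\<delta> > 0" and coer: "\<forall>x. \<delta> * (nrm x)^2 \<le> Re (ip (U x) x)"
    and Ub: "\<forall>x. nrm (U x) \<le> C * nrm x"
  shows "\<exists>x. U x = y"
proof -
  have zero: "r = 0" if "ip (U r) r = 0" for r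
  proof -
    have "\<delta> * (nrm r)^2 \<le> 0" using coer that by (metis zero_complex.simps(1))
    then have "(nrm r)^2 \<le> 0" using dpos by (simp add: mult_le_0_iff)
    then show ?thesis using nrm_zero_iff by simp
  qed
  have low: "\<delta> * nrm x \<le> nrm (U x)" for x
  proof (cases "x = 0")
    case True then show ?thesis by (simp add: nrm_nonneg)
  next
    case False
    then have nx: "nrm x > 0" using nrm_zero_iff nrm_nonneg by (metis less_eq_real_def)
    have "\<delta> * (nrm x)^2 \<le> Re (ip (U x) x)" using coer by simp
    also have "\<dots> \<le> cmod (ip (U x) x)" by (rule complex_Re_le_cmod)
    also have "\<dots> \<le> nrm (U x) * nrm x" by (rule cauchy_schwarz)
    finally have "(\<delta> * nrm x) * nrm x \<le> nrm (U x) * nrm x" by (simp add: power2_eq_square mult_ac)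
    then show ?thesis using nx by simp
  qed
  have "\<exists>b. \<forall>u. ip (U u) (U b) = ip (U u) y"
  proof (rule minimize[where \<delta>=\<delta> and C=C and D="C * nrm y"])
    show "\<forall>x. cmod (ip (U x) y) \<le> C * nrm y * nrm x"
    proof
      fix x
      have "cmod (ip (U x) y) \<le> nrm (U x) * nrm y" by (rule cauchy_schwarz)
      also have "\<dots> \<le> C * nrm x * nrm y" using Ub nrm_nonneg by (simp add: mult_right_mono)
      finally show "cmod (ip (U x) y) \<le> C * nrm y * nrm x" by (simp add: mult_ac)
    qed
  qed (auto simp: Uadd Usm ip_add_left ip_sm_left dpos low Ub)
  then obtain b where b: "\<forall>u. ip (U u) (U b) = ip (U u) y" by blast
  have "ip (U (U b - y)) (U b - y) = 0" using b by (simp add: ip_diff_right)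
  then have "U b - y = 0" by (rule zero)
  then show ?thesis by auto
qed

lemma coercive_inj:
  assumes Uadd: "\<forall>x y. U (x+y) = U x + U y"
    and dpos: "\<delta> > 0" and coer: "\<forall>x. \<delta> * (nrm x)^2 \<le> Re (ip (U x) x)"
    and eq: "U a = U b"
  shows "a = b"
proof -
  have "U (a - b) = 0" using lin_diff[OF Uadd] eq by simp
  then have "\<delta> * (nrm (a - b))^2 \<le> 0" using coer by (metis ip_zero_left zero_complex.simps(1))
  then have "(nrm (a - b))^2 \<le> 0" using dpos by (simp add: mult_le_0_iff)
  then show ?thesis using nrm_zero_iff by simp
qed

end


definition pm :: "bool \<Rightarrow> 'h::ab_group_add \<Rightarrow> 'h" where "pm b x = (if b then x else - x)"
definition ksg :: "('i \<Rightarrow> 'i \<Rightarrow> bool) \<Rightarrow> 'i set \<Rightarrow> 'i \<Rightarrow> bool" where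
  "ksg lt S j = even (card {i\<in>S. lt i j})"

lemma pm_pm: "pm a (pm b x) = pm (a = b) x" by (auto simp: pm_def)
lemma pm_sum: "pm b (sum f A) = (\<Sum>i\<in>A. pm b (f i))" by (auto simp: pm_def sum_negf)
lemma pm_cancel: "pm b x + pm (\<not> b) x = 0" by (auto simp: pm_def)
lemma pm_zero[simp]: "pm b 0 = 0" by (auto simp: pm_def)
lemma pm_True[simp]: "pm True x = x" by (auto simp: pm_def)
lemma pm_lin:
  fixes T :: "'a::ab_group_add \<Rightarrow> 'b::ab_group_add"
  assumes "\<forall>x y. T (x + y) = T x + T y"
  shows "T (pm b x) = pm b (T x)"
proof -
  have "T x + T (- x) = 0" using assms[rule_format, of x "-x"] lin_zero[OF assms] by simp
  then have "T (- x) = - T x" using minus_unique[of "T x" "T (-x)"] by simp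
  then show ?thesis by (auto simp: pm_def)
qed
lemma lin_sum:
  fixes T :: "'a::ab_group_add \<Rightarrow> 'b::ab_group_add"
  assumes "\<forall>x y. T (x + y) = T x + T y"
  shows "T (sum f A) = (\<Sum>i\<in>A. T (f i))"
proof (induction A rule: infinite_finite_induct)
  case (infinite A) then show ?case using lin_zero[OF assms] by simp
next
  case empty then show ?case using lin_zero[OF assms] by simp
next
  case (insert a A) then show ?case using assms by simp
qed

lemma koszul_d_alt: "koszul_d lt I T f S = (if S \<subseteq> I then (\<Sum>j\<in>I - S. pm (ksg lt S j) (T j (f (insert j S)))) else 0)"
  unfolding koszul_d_def pm_def ksg_def by simp

definition kext :: "(complex \<Rightarrow> 'h \<Rightarrow> 'h) \<Rightarrow> ('i \<Rightarrow> 'i \<Rightarrow> bool) \<Rightarrow> 'i set \<Rightarrow> ('i \<Rightarrow> complex) \<Rightarrow> ('i set \<Rightarrow> 'h::ab_group_add) \<Rightarrow> 'i set \<Rightarrow> 'h" where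
  "kext sm lt I c f S = (if S \<subseteq> I then (\<Sum>l\<in>S. pm (ksg lt S l) (sm (c l) (f (S - {l})))) else 0)"

lemma ksg_insert_self:
  assumes "\<not> lt j j" shows "ksg lt (insert j S) j = ksg lt S j"
proof -
  have "{i\<in>insert j S. lt i j} = {i\<in>S. lt i j}" using assms by auto
  then show ?thesis unfolding ksg_def by simp
qed

lemma ksg_remove_self:
  assumes "\<not> lt l l" shows "ksg lt (S - {l}) l = ksg lt S l"
proof -
  have "{i\<in>S - {l}. lt i l} = {i\<in>S. lt i l}" using assms by auto
  then show ?thesis unfolding ksg_def by simp
qed

lemma ksg_swap:
  assumes fin: "finite S" and jS: "j \<notin> S" and lS: "l \<in> S" and tri: "lt j l \<longleftrightarrow> \<not> lt l j"
  shows "(ksg lt S j = ksg lt (insert j S) l) \<longleftrightarrow> \<not> (ksg lt S l = ksg lt (S - {l}) j)"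
proof -
  define a where "a = card {i\<in>S. lt i l}"
  define b where "b = card {i\<in>S. lt i j}"
  have fa: "finite {i\<in>S. lt i l}" "finite {i\<in>S. lt i j}" using fin by auto
  show ?thesis
  proof (cases "lt j l")
    case True
    then have nlj: "\<not> lt l j" using tri by simp
    have "{i\<in>insert j S. lt i l} = insert j {i\<in>S. lt i l}" using True by auto
    then have c1: "card {i\<in>insert j S. lt i l} = a + 1" using fa jS unfolding a_def by simp
    have "{i\<in>S - {l}. lt i j} = {i\<in>S. lt i j}" using nlj by auto
    then have c2: "card {i\<in>S - {l}. lt i j} = b" unfolding b_def by simp
    show ?thesis unfolding ksg_def c1 c2 a_def[symmetric] b_def[symmetric] by auto
  next
    case False
    then have lj: "lt l j" using tri by simp
    have "{i\<in>insert j S. lt i l} = {i\<in>S. lt i l}" using False by auto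
    then have c1: "card {i\<in>insert j S. lt i l} = a" unfolding a_def by simp
    have "{i\<in>S - {l}. lt i j} = {i\<in>S. lt i j} - {l}" by auto
    moreover have "l \<in> {i\<in>S. lt i j}" using lj lS by simp
    ultimately have c2: "card {i\<in>S - {l}. lt i j} = b - 1" and b1: "b \<ge> 1"
      using fa unfolding b_def by (auto simp: card_gt_0_iff Suc_le_eq)
    have "even (b - 1) \<longleftrightarrow> \<not> even b" using b1 by (cases b) auto
    then show ?thesis unfolding ksg_def c1 c2 a_def[symmetric] b_def[symmetric] by auto
  qed
qed

context hs begin

lemma koszul_homotopy:
  assumes fin: "finite I" and irr: "\<forall>j. \<not> lt j j"
    and tri: "\<forall>j\<in>I. \<forall>l\<in>I. j \<noteq> l \<longrightarrow> (lt j l \<longleftrightarrow> \<not> lt l j)"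
    and Tadd: "\<forall>j\<in>I. \<forall>x y. T j (x + y) = T j x + T j y"
    and Tsm: "\<forall>j\<in>I. \<forall>c x. T j (sm c x) = sm c (T j x)"
    and SI: "S \<subseteq> I"
  shows "koszul_d lt I T (kext sm lt I c f) S + kext sm lt I c (koszul_d lt I T f) S
       = (\<Sum>j\<in>I. sm (c j) (T j (f S)))"
proof -
  have finS: "finite S" using fin SI finite_subset by blast
  have smadd: "\<forall>x y. sm a (x + y) = sm a x + sm a y" for a by (simp add: sm_add_right)
  define X where "X j l = pm (ksg lt S j = ksg lt (insert j S) l) (sm (c l) (T j (f (insert j S - {l}))))" for j l
  define Y where "Y l j = pm (ksg lt S l = ksg lt (S - {l}) j) (sm (c l) (T j (f (insert j (S - {l})))))" for l j
  have L1: "koszul_d lt I T (kext sm lt I c f) S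
      = (\<Sum>j\<in>I - S. sm (c j) (T j (f S))) + (\<Sum>j\<in>I - S. \<Sum>l\<in>S. X j l)"
  proof -
    have "koszul_d lt I T (kext sm lt I c f) S
        = (\<Sum>j\<in>I - S. pm (ksg lt S j) (T j (kext sm lt I c f (insert j S))))"
      using SI by (simp add: koszul_d_alt)
    also have "\<dots> = (\<Sum>j\<in>I - S. sm (c j) (T j (f S)) + (\<Sum>l\<in>S. X j l))"
    proof (rule sum.cong[OF refl])
      fix j assume j: "j \<in> I - S"
      have ins: "insert j S \<subseteq> I" using j SI by auto
      have Tj: "\<forall>x y. T j (x + y) = T j x + T j y" using Tadd j by blast
      have Tsmj: "\<forall>c x. T j (sm c x) = sm c (T j x)" using Tsm j by blast
      have "pm (ksg lt S j) (T j (kext sm lt I c f (insert j S)))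
          = (\<Sum>l\<in>insert j S. pm (ksg lt S j = ksg lt (insert j S) l) (sm (c l) (T j (f (insert j S - {l})))))"
        using ins by (simp add: kext_def lin_sum[OF Tj] pm_lin[OF Tj] pm_sum pm_pm Tsmj)
      also have "\<dots> = pm (ksg lt S j = ksg lt (insert j S) j) (sm (c j) (T j (f (insert j S - {j})))) + (\<Sum>l\<in>S. X j l)"
        using j finS unfolding X_def by (simp add: sum.insert)
      also have "insert j S - {j} = S" using j by auto
      also have "ksg lt (insert j S) j = ksg lt S j" using irr by (simp add: ksg_insert_self)
      finally show "pm (ksg lt S j) (T j (kext sm lt I c f (insert j S))) = sm (c j) (T j (f S)) + (\<Sum>l\<in>S. X j l)"
        by simp
    qed
    also have "\<dots> = (\<Sum>j\<in>I - S. sm (c j) (T j (f S))) + (\<Sum>j\<in>I - S. \<Sum>l\<in>S. X j l)"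
      by (simp add: sum.distrib)
    finally show ?thesis .
  qed
  have L2: "kext sm lt I c (koszul_d lt I T f) S
      = (\<Sum>l\<in>S. sm (c l) (T l (f S))) + (\<Sum>l\<in>S. \<Sum>j\<in>I - S. Y l j)"
  proof -
    have "kext sm lt I c (koszul_d lt I T f) S
        = (\<Sum>l\<in>S. pm (ksg lt S l) (sm (c l) (koszul_d lt I T f (S - {l}))))"
      using SI by (simp add: kext_def)
    also have "\<dots> = (\<Sum>l\<in>S. sm (c l) (T l (f S)) + (\<Sum>j\<in>I - S. Y l j))"
    proof (rule sum.cong[OF refl])
      fix l assume l: "l \<in> S"
      have sub: "S - {l} \<subseteq> I" using SI by auto
      have ID: "I - (S - {l}) = insert l (I - S)" using l SI by auto
      have "pm (ksg lt S l) (sm (c l) (koszul_d lt I T f (S - {l})))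
          = (\<Sum>j\<in>insert l (I - S). pm (ksg lt S l = ksg lt (S - {l}) j) (sm (c l) (T j (f (insert j (S - {l}))))))"
        using sub by (simp add: koszul_d_alt ID sm_sum_right pm_lin[OF smadd] pm_sum pm_pm)
      also have "\<dots> = pm (ksg lt S l = ksg lt (S - {l}) l) (sm (c l) (T l (f (insert l (S - {l}))))) + (\<Sum>j\<in>I - S. Y l j)"
        using l fin unfolding Y_def by (simp add: sum.insert)
      also have "insert l (S - {l}) = S" using l by auto
      also have "ksg lt (S - {l}) l = ksg lt S l" using irr by (simp add: ksg_remove_self)
      finally show "pm (ksg lt S l) (sm (c l) (koszul_d lt I T f (S - {l}))) = sm (c l) (T l (f S)) + (\<Sum>j\<in>I - S. Y l j)"
        by simp
    qed
    also have "\<dots> = (\<Sum>l\<in>S. sm (c l) (T l (f S))) + (\<Sum>l\<in>S. \<Sum>j\<in>I - S. Y l j)"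
      by (simp add: sum.distrib)
    finally show ?thesis .
  qed
  have cancel: "X j l + Y l j = 0" if j: "j \<in> I - S" and l: "l \<in> S" for j l
  proof -
    have jl: "j \<noteq> l" using j l by auto
    have e1: "insert j S - {l} = insert j (S - {l})" using jl by auto
    have tr: "lt j l \<longleftrightarrow> \<not> lt l j" using tri j l SI jl by auto
    have "(ksg lt S j = ksg lt (insert j S) l) \<longleftrightarrow> \<not> (ksg lt S l = ksg lt (S - {l}) j)"
      using ksg_swap[OF finS _ l tr] j by simp
    then show ?thesis unfolding X_def Y_def e1 pm_def by auto
  qed
  have sw: "(\<Sum>l\<in>S. \<Sum>j\<in>I - S. Y l j) = (\<Sum>j\<in>I - S. \<Sum>l\<in>S. Y l j)" by (rule sum.swap)
  have "(\<Sum>j\<in>I - S. \<Sum>l\<in>S. X j l) + (\<Sum>l\<in>S. \<Sum>j\<in>I - S. Y l j) = (\<Sum>j\<in>I - S. \<Sum>l\<in>S. X j l + Y l j)"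
    unfolding sw by (simp only: sum.distrib)
  also have "\<dots> = 0" using cancel by simp
  finally have C: "(\<Sum>j\<in>I - S. \<Sum>l\<in>S. X j l) + (\<Sum>l\<in>S. \<Sum>j\<in>I - S. Y l j) = 0" .
  have "(\<Sum>j\<in>I. sm (c j) (T j (f S))) = (\<Sum>j\<in>I - S. sm (c j) (T j (f S))) + (\<Sum>l\<in>S. sm (c l) (T l (f S)))"
    using sum.subset_diff[OF SI fin] by simp
  then show ?thesis using L1 L2 C by (simp add: algebra_simps)
qed

end


context hs begin

lemma kext_zero: "kext sm lt I c (\<lambda>S. 0) S = 0"
  unfolding kext_def by simp

lemma kext_chain: "kext sm lt I c g \<in> koszul_chains I"
  unfolding koszul_chains_def kext_def by simp

lemma koszul_exact_of_inverse:
  assumes fin: "finite I" and irr: "\<forall>j. \<not> lt j j"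
    and tri: "\<forall>j\<in>I. \<forall>l\<in>I. j \<noteq> l \<longrightarrow> (lt j l \<longleftrightarrow> \<not> lt l j)"
    and Tadd: "\<forall>j\<in>I. \<forall>x y. T j (x + y) = T j x + T j y"
    and Tsm: "\<forall>j\<in>I. \<forall>c x. T j (sm c x) = sm c (T j x)"
    and Vadd: "\<forall>x y. V (x + y) = V x + V y"
    and VT: "\<forall>j\<in>I. \<forall>x. V (T j x) = T j (V x)"
    and inv: "\<forall>x. (\<Sum>j\<in>I. sm (c j) (T j (V x))) = x"
  shows "koszul_exact lt I T"
  unfolding koszul_exact_def
proof (intro ballI impI)
  fix f assume fc: "f \<in> koszul_chains I" and df: "\<forall>S. koszul_d lt I T f S = 0"
  define g where "g = kext sm lt I c (\<lambda>S. V (f S))"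
  have dVf: "koszul_d lt I T (\<lambda>S. V (f S)) S = 0" for S
  proof (cases "S \<subseteq> I")
    case True
    have "koszul_d lt I T (\<lambda>S. V (f S)) S = (\<Sum>j\<in>I - S. pm (ksg lt S j) (V (T j (f (insert j S)))))"
      using True VT by (simp add: koszul_d_alt)
    also have "\<dots> = V (koszul_d lt I T f S)"
      using True by (simp add: koszul_d_alt lin_sum[OF Vadd] pm_lin[OF Vadd])
    also have "\<dots> = 0" using df lin_zero[OF Vadd] by simp
    finally show ?thesis .
  next
    case False then show ?thesis by (simp add: koszul_d_alt)
  qed
  have "f = koszul_d lt I T g"
  proof
    fix S
    show "f S = koszul_d lt I T g S"
    proof (cases "S \<subseteq> I")
      case True
      have "koszul_d lt I T g S + kext sm lt I c (koszul_d lt I T (\<lambda>S. V (f S))) S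
          = (\<Sum>j\<in>I. sm (c j) (T j (V (f S))))"
        unfolding g_def by (rule koszul_homotopy[OF fin irr tri Tadd Tsm True])
      moreover have "kext sm lt I c (koszul_d lt I T (\<lambda>S. V (f S))) S = 0"
        using dVf kext_zero by (simp add: kext_def)
      ultimately show ?thesis using inv by simp
    next
      case False
      then show ?thesis using fc by (simp add: koszul_d_alt koszul_chains_def)
    qed
  qed
  then show "\<exists>g\<in>koszul_chains I. f = koszul_d lt I T g" using kext_chain unfolding g_def by blast
qed

end


lemma idx_finite: "finite (idx_set N n)"
proof -
  have "idx_set N n = (SIGMA k:{..<N}. {..<n k} \<times> {..<n k})" by (auto simp: idx_set_def)
  then show ?thesis by simp
qed

lemma lex3_irr: "\<not> lex3 j j" by (cases j) (auto simp: lex3_def)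
lemma lex3_tri: "j \<noteq> l \<Longrightarrow> lex3 j l \<longleftrightarrow> \<not> lex3 l j" by (cases j; cases l) (auto simp: lex3_def)

lemma sum_idx:
  assumes k: "k < N" and z: "\<forall>p\<in>idx_set N n. fst p \<noteq> k \<longrightarrow> F p = 0"
  shows "(\<Sum>p\<in>idx_set N n. F p) = (\<Sum>i<n k. \<Sum>j<n k. F (k, i, j))"
proof -
  define A where "A = (\<lambda>(i, j). (k, i, j)) ` ({..<n k} \<times> {..<n k})"
  have sub: "A \<subseteq> idx_set N n" using k by (auto simp: A_def idx_set_def)
  have out: "\<forall>p\<in>idx_set N n - A. F p = 0"
  proof
    fix p assume p: "p \<in> idx_set N n - A"
    obtain a b d where pe: "p = (a, b, d)" by (cases p) auto
    have "a \<noteq> k" using p unfolding pe A_def idx_set_def by auto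
    then show "F p = 0" using z p pe by auto
  qed
  have "(\<Sum>p\<in>idx_set N n. F p) = (\<Sum>p\<in>A. F p)"
    by (rule sum.mono_neutral_right[OF idx_finite sub out])
  also have "\<dots> = (\<Sum>q\<in>{..<n k} \<times> {..<n k}. F (k, fst q, snd q))"
    unfolding A_def by (subst sum.reindex) (auto simp: inj_on_def case_prod_beta)
  also have "\<dots> = (\<Sum>i<n k. \<Sum>j<n k. F (k, i, j))"
    by (simp add: sum.cartesian_product case_prod_beta)
  finally show ?thesis .
qed

context hs begin

lemma ip_sm_sm: "ip (sm a x) (sm b y) = a * cnj b * ip x y"
  by (simp add: ip_sm_left ip_sm_right)

lemma coer_lemma:
  assumes bop: "\<forall>i<m. \<forall>j<m. bounded_op sm ip (Q i j)"
    and ge: "opmat_ge_scalar ip m (opmat_add Q (opmat_adj ip Q)) s"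
  shows "s / 2 * (\<Sum>i<m. (cmod (v i))^2) * (nrm x)^2
         \<le> Re (\<Sum>i<m. \<Sum>j<m. cnj (v i) * v j * ip (Q i j x) x)"
proof -
  define y where "y i = sm (v i) x" for i
  define G where "G a b = cnj (v a) * v b * ip (Q a b x) x" for a b
  define Sa where "Sa = (\<Sum>i<m. \<Sum>j<m. G i j)"
  have Qsm: "Q i j (sm c u) = sm c (Q i j u)" if "i < m" "j < m" for i j c u
    using bop that unfolding bounded_op_def by blast
  have adj: "ip (Q i j a) b = ip a (hadj ip (Q i j) b)" if "i < m" "j < m" for i j a b
    using hadj_prop bop that by blast
  have t1: "ip (Q i j (y j)) (y i) = G i j" if "i < m" "j < m" for i j
    unfolding y_def G_def using that by (simp add: Qsm ip_sm_sm mult_ac)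
  have t2: "ip (hadj ip (Q j i) (y j)) (y i) = cnj (G j i)" if "i < m" "j < m" for i j
  proof -
    have "ip (hadj ip (Q j i) (y j)) (y i) = cnj (ip (y i) (hadj ip (Q j i) (y j)))" by (rule ip_conj)
    also have "ip (y i) (hadj ip (Q j i) (y j)) = ip (Q j i (y i)) (y j)" using adj[of j i] that by simp
    also have "\<dots> = G j i" unfolding y_def G_def using that by (simp add: Qsm ip_sm_sm mult_ac)
    finally show ?thesis .
  qed
  have "ip_n ip m (opmat_apply m (opmat_add Q (opmat_adj ip Q)) y) y
      = (\<Sum>i<m. \<Sum>j<m. ip (Q i j (y j)) (y i) + ip (hadj ip (Q j i) (y j)) (y i))"
    unfolding ip_n_def opmat_apply_def opmat_add_def opmat_adj_def by (simp add: ip_sum_left ip_add_left)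
  also have "\<dots> = (\<Sum>i<m. \<Sum>j<m. G i j + cnj (G j i))"
    by (intro sum.cong refl) (simp add: t1 t2)
  also have "\<dots> = Sa + cnj (\<Sum>i<m. \<Sum>j<m. G j i)"
    unfolding Sa_def by (simp add: sum.distrib)
  also have "(\<Sum>i<m. \<Sum>j<m. G j i) = Sa" unfolding Sa_def by (rule sum.swap)
  finally have e1: "ip_n ip m (opmat_apply m (opmat_add Q (opmat_adj ip Q)) y) y = Sa + cnj Sa" .
  have "ip_n ip m y y = (\<Sum>i<m. complex_of_real ((cmod (v i))^2 * (nrm x)^2))"
    unfolding ip_n_def y_def
  proof (intro sum.cong refl)
    fix i
    have "ip (sm (v i) x) (sm (v i) x) = (v i * cnj (v i)) * ip x x" by (simp add: ip_sm_sm)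
    also have "\<dots> = complex_of_real ((cmod (v i))^2) * complex_of_real ((nrm x)^2)"
      by (simp only: complex_norm_square ip_self_nrm)
    finally show "ip (sm (v i) x) (sm (v i) x) = complex_of_real ((cmod (v i))^2 * (nrm x)^2)" by simp
  qed
  then have e2: "Re (complex_of_real s * ip_n ip m y y) = s * ((\<Sum>i<m. (cmod (v i))^2) * (nrm x)^2)"
    by (simp add: sum_distrib_right)
  have "0 \<le> Re (ip_n ip m (opmat_apply m (opmat_add Q (opmat_adj ip Q)) y) y - complex_of_real s * ip_n ip m y y)"
    using ge unfolding opmat_ge_scalar_def by blast
  then have "0 \<le> Re (Sa + cnj Sa) - Re (complex_of_real s * ip_n ip m y y)"
    unfolding e1 by (simp only: minus_complex.simps(1))
  then have "0 \<le> Re (Sa + cnj Sa) - s * ((\<Sum>i<m. (cmod (v i))^2) * (nrm x)^2)"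
    by (simp only: e2)
  then have "s * ((\<Sum>i<m. (cmod (v i))^2) * (nrm x)^2) \<le> 2 * Re Sa"
    by simp
  then show ?thesis unfolding Sa_def G_def by (simp add: field_simps)
qed

end


context hs begin

lemma exact_if_not_Pi:
  assumes k: "k < N"
    and Bc: "comm_op_algebra sm ip B" and RB: "\<forall>k<N. \<forall>i<n k. \<forall>j<n k. R k i j \<in> B"
    and s: "s > 0" and ge: "opmat_ge_scalar ip (n k) (opmat_add (R k) (opmat_adj ip (R k))) s"
    and v: "\<exists>i<n k. v i \<noteq> 0"
    and neg: "Re (\<Sum>i<n k. \<Sum>j<n k. cnj (v i) * (z (k,i,j) + cnj (z (k,j,i))) * v j) \<le> 0"
  shows "koszul_exact lex3 (idx_set N n) (\<lambda>j x. flat_family R j x - sm (z j) x)"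
proof -
  define I where "I = idx_set N n"
  define T where "T = (\<lambda>j x. flat_family R j x - sm (z j) x)"
  define c where "c p = (if fst p = k then cnj (v (fst (snd p))) * v (snd (snd p)) else 0)" for p :: "nat \<times> nat \<times> nat"
  define U where "U x = (\<Sum>p\<in>I. sm (c p) (T p x))" for x
  have finI: "finite I" unfolding I_def by (rule idx_finite)
  have inB: "flat_family R p \<in> B" if "p \<in> I" for p
    using that RB unfolding I_def idx_set_def flat_family_def by auto
  have bop: "bounded_op sm ip (flat_family R p)" if "p \<in> I" for p
    using inB[OF that] Bc unfolding comm_op_algebra_def by blast
  have Radd: "\<forall>x y. flat_family R p (x + y) = flat_family R p x + flat_family R p y" if "p \<in> I" for p
    using bop[OF that] unfolding bounded_op_def by blast
  have Rsm: "flat_family R p (sm a x) = sm a (flat_family R p x)" if "p \<in> I" for p a x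
    using bop[OF that] unfolding bounded_op_def by blast
  have Rcomm: "flat_family R p (flat_family R q x) = flat_family R q (flat_family R p x)" if "p \<in> I" "q \<in> I" for p q x
  proof -
    have "flat_family R p \<circ> flat_family R q = flat_family R q \<circ> flat_family R p"
      using inB[OF that(1)] inB[OF that(2)] Bc unfolding comm_op_algebra_def by blast
    then have "(flat_family R p \<circ> flat_family R q) x = (flat_family R q \<circ> flat_family R p) x" by simp
    then show ?thesis by simp
  qed
  have Tadd: "\<forall>j\<in>I. \<forall>x y. T j (x + y) = T j x + T j y"
    using Radd unfolding T_def by (simp add: sm_add_right)
  have Tsm: "\<forall>j\<in>I. \<forall>a x. T j (sm a x) = sm a (T j x)"
    using Rsm unfolding T_def by (simp add: sm_diff_right sm_sm mult.commute)
  have Tcomm: "T p (T q x) = T q (T p x)" if "p \<in> I" "q \<in> I" for p q x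
  proof -
    have e1: "T p (T q x) = flat_family R p (flat_family R q x) - sm (z q) (flat_family R p x)
        - sm (z p) (flat_family R q x) + sm (z p * z q) x"
      unfolding T_def using that by (simp add: lin_diff[OF Radd[OF that(1)]] Rsm sm_diff_right sm_sm mult.commute)
    have e2: "T q (T p x) = flat_family R q (flat_family R p x) - sm (z p) (flat_family R q x)
        - sm (z q) (flat_family R p x) + sm (z p * z q) x"
      unfolding T_def using that by (simp add: lin_diff[OF Radd[OF that(2)]] Rsm sm_diff_right sm_sm mult.commute)
    have e3: "flat_family R q (flat_family R p x) = flat_family R p (flat_family R q x)"
      using Rcomm[OF that] by simp
    show ?thesis unfolding e1 e2 e3 by (simp add: algebra_simps)
  qed
  have Tj: "\<forall>x y. T j (x + y) = T j x + T j y" if "j \<in> I" for j using Tadd that by blast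
  have Uadd: "\<forall>x y. U (x + y) = U x + U y"
  proof (intro allI)
    fix x y
    have "U (x + y) = (\<Sum>p\<in>I. sm (c p) (T p x) + sm (c p) (T p y))"
      unfolding U_def by (intro sum.cong refl) (simp add: Tj sm_add_right)
    then show "U (x + y) = U x + U y" unfolding U_def by (simp add: sum.distrib)
  qed
  have Usm: "\<forall>a x. U (sm a x) = sm a (U x)"
  proof (intro allI)
    fix a x
    have "U (sm a x) = (\<Sum>p\<in>I. sm a (sm (c p) (T p x)))"
      unfolding U_def
    proof (intro sum.cong refl)
      fix p assume p: "p \<in> I"
      have "T p (sm a x) = sm a (T p x)" using Tsm p by blast
      then show "sm (c p) (T p (sm a x)) = sm a (sm (c p) (T p x))" by (simp add: sm_sm mult.commute)
    qed
    then show "U (sm a x) = sm a (U x)" unfolding U_def by (simp add: sm_sum_right)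
  qed
  have UT: "T p (U x) = U (T p x)" if p: "p \<in> I" for p x
  proof -
    have "T p (U x) = (\<Sum>q\<in>I. T p (sm (c q) (T q x)))" unfolding U_def by (rule lin_sum[OF Tj[OF p]])
    also have "\<dots> = (\<Sum>q\<in>I. sm (c q) (T q (T p x)))"
    proof (intro sum.cong refl)
      fix q assume q: "q \<in> I"
      have "T p (sm (c q) (T q x)) = sm (c q) (T p (T q x))" using Tsm p by blast
      also have "T p (T q x) = T q (T p x)" by (rule Tcomm[OF p q])
      finally show "T p (sm (c q) (T q x)) = sm (c q) (T q (T p x))" .
    qed
    finally show ?thesis unfolding U_def .
  qed
  have "\<forall>p\<in>I. \<exists>C. \<forall>x. nrm (flat_family R p x) \<le> C * nrm x"
    using bop unfolding bounded_op_def by blast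
  then have "\<exists>Cf. \<forall>p\<in>I. \<forall>x. nrm (flat_family R p x) \<le> Cf p * nrm x" by (rule bchoice)
  then obtain Cf where Cf: "\<forall>p\<in>I. \<forall>x. nrm (flat_family R p x) \<le> Cf p * nrm x" by blast
  define C where "C = (\<Sum>p\<in>I. cmod (c p) * (Cf p + cmod (z p)))"
  have Ub: "\<forall>x. nrm (U x) \<le> C * nrm x"
  proof
    fix x
    have "nrm (U x) \<le> (\<Sum>p\<in>I. nrm (sm (c p) (T p x)))" unfolding U_def by (rule nrm_sum)
    also have "\<dots> \<le> (\<Sum>p\<in>I. cmod (c p) * ((Cf p + cmod (z p)) * nrm x))"
    proof (rule sum_mono)
      fix p assume p: "p \<in> I"
      have "nrm (T p x) \<le> nrm (flat_family R p x) + nrm (sm (z p) x)"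
        unfolding T_def by (rule nrm_diff_triangle)
      also have "\<dots> \<le> Cf p * nrm x + cmod (z p) * nrm x" using Cf p by (simp add: nrm_sm)
      finally have "nrm (T p x) \<le> (Cf p + cmod (z p)) * nrm x" by (simp add: algebra_simps)
      then show "nrm (sm (c p) (T p x)) \<le> cmod (c p) * ((Cf p + cmod (z p)) * nrm x)"
        by (simp add: nrm_sm mult_left_mono)
    qed
    also have "\<dots> = C * nrm x" unfolding C_def by (simp add: sum_distrib_right mult.assoc)
    finally show "nrm (U x) \<le> C * nrm x" .
  qed
  define V2 where "V2 = (\<Sum>i<n k. (cmod (v i))^2)"
  define \<delta> where "\<delta> = s / 2 * V2"
  have V2pos: "V2 > 0"
  proof -
    obtain i where i: "i < n k" "v i \<noteq> 0" using v by blast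
    show ?thesis unfolding V2_def by (rule sum_pos2[of _ i]) (use i in auto)
  qed
  have dpos: "\<delta> > 0" unfolding \<delta>_def using s V2pos by simp
  define w where "w = (\<Sum>i<n k. \<Sum>j<n k. cnj (v i) * v j * z (k, i, j))"
  have Rew: "Re w \<le> 0"
  proof -
    have "(\<Sum>i<n k. \<Sum>j<n k. cnj (v i) * (z (k,i,j) + cnj (z (k,j,i))) * v j)
        = w + (\<Sum>i<n k. \<Sum>j<n k. cnj (v i) * cnj (z (k,j,i)) * v j)"
      unfolding w_def by (simp add: sum.distrib algebra_simps)
    moreover have "Re (\<Sum>i<n k. \<Sum>j<n k. cnj (v i) * cnj (z (k,j,i)) * v j) = Re w"
    proof -
      have "(\<Sum>i<n k. \<Sum>j<n k. cnj (v i) * cnj (z (k,j,i)) * v j)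
          = cnj (\<Sum>i<n k. \<Sum>j<n k. cnj (v j) * v i * z (k,j,i))" by (simp add: mult_ac)
      also have "(\<Sum>i<n k. \<Sum>j<n k. cnj (v j) * v i * z (k,j,i)) = w"
        unfolding w_def by (rule sum.swap)
      finally show ?thesis by simp
    qed
    ultimately show ?thesis using neg by simp
  qed
  have Qbop: "\<forall>i<n k. \<forall>j<n k. bounded_op sm ip (R k i j)"
    using bop k unfolding I_def idx_set_def flat_family_def by auto
  have coer: "\<forall>x. \<delta> * (nrm x)^2 \<le> Re (ip (U x) x)"
  proof
    fix x
    have "ip (U x) x = (\<Sum>p\<in>I. c p * ip (T p x) x)" unfolding U_def by (simp add: ip_sum_left ip_sm_left)
    also have "\<dots> = (\<Sum>i<n k. \<Sum>j<n k. c (k, i, j) * ip (T (k, i, j) x) x)"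
      unfolding I_def by (rule sum_idx[OF k]) (simp add: c_def)
    also have "\<dots> = (\<Sum>i<n k. \<Sum>j<n k. cnj (v i) * v j * ip (R k i j x) x)
                   - w * complex_of_real ((nrm x)^2)"
    proof -
      have pt: "c (k, i, j) * ip (T (k, i, j) x) x
          = cnj (v i) * v j * ip (R k i j x) x - cnj (v i) * v j * z (k, i, j) * complex_of_real ((nrm x)^2)" for i j
        unfolding c_def T_def flat_family_def
        by (simp add: ip_diff_left ip_sm_left ip_self_nrm right_diff_distrib mult.assoc)
      show ?thesis unfolding pt w_def by (simp add: sum_subtractf sum_distrib_right)
    qed
    finally have "Re (ip (U x) x) = Re (\<Sum>i<n k. \<Sum>j<n k. cnj (v i) * v j * ip (R k i j x) x)
                   - Re w * (nrm x)^2" by simp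
    moreover have "s / 2 * V2 * (nrm x)^2 \<le> Re (\<Sum>i<n k. \<Sum>j<n k. cnj (v i) * v j * ip (R k i j x) x)"
      unfolding V2_def by (rule coer_lemma[OF Qbop ge])
    moreover have "Re w * (nrm x)^2 \<le> 0" using Rew by (simp add: mult_nonpos_nonneg)
    ultimately show "\<delta> * (nrm x)^2 \<le> Re (ip (U x) x)" unfolding \<delta>_def by linarith
  qed
  have "\<forall>y. \<exists>x. U x = y" using coercive_inv[OF Uadd Usm dpos coer Ub] by blast
  then have "\<exists>V. \<forall>y. U (V y) = y" by (rule choice)
  then obtain V where UV: "\<And>y. U (V y) = y" by blast
  have inj: "a = b" if "U a = U b" for a b by (rule coercive_inj[OF Uadd dpos coer that])
  have Vadd: "\<forall>x y. V (x + y) = V x + V y"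
  proof (intro allI)
    fix x y show "V (x + y) = V x + V y" by (rule inj) (simp add: UV Uadd)
  qed
  have VT: "\<forall>j\<in>I. \<forall>x. V (T j x) = T j (V x)"
  proof (intro ballI allI)
    fix j x assume j: "j \<in> I"
    show "V (T j x) = T j (V x)" by (rule inj) (simp add: UV UT[OF j, symmetric])
  qed
  have invV: "\<forall>x. (\<Sum>j\<in>I. sm (c j) (T j (V x))) = x" using UV unfolding U_def by simp
  have irr: "\<forall>j. \<not> lex3 j j" using lex3_irr by blast
  have tri: "\<forall>j\<in>I. \<forall>l\<in>I. j \<noteq> l \<longrightarrow> (lex3 j l \<longleftrightarrow> \<not> lex3 l j)" using lex3_tri by blast
  have "koszul_exact lex3 I T"
    by (rule koszul_exact_of_inverse[OF finI irr tri Tadd Tsm Vadd VT invV])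
  then show ?thesis unfolding I_def T_def .
qed

end

theorem theorem3p2:
  fixes sm :: "complex \<Rightarrow> 'h::ab_group_add \<Rightarrow> 'h"
    and ip :: "'h \<Rightarrow> 'h \<Rightarrow> complex"
    and N :: nat and n :: "nat \<Rightarrow> nat"
    and R :: "nat \<Rightarrow> nat \<Rightarrow> nat \<Rightarrow> 'h \<Rightarrow> 'h"
  assumes "\<forall>k<N. n k > 0"
    and "class_A sm ip N n R"
  shows "\<forall>z\<in>taylor_spectrum sm lex3 (idx_set N n) (flat_family R).
           \<forall>k<N. Pi_mat (n k) (\<lambda>i j. z (k, i, j))"
proof (intro ballI allI impI)
  fix z k assume z: "z \<in> taylor_spectrum sm lex3 (idx_set N n) (flat_family R)" and k: "k < N"
  from assms(2) obtain B s where H: "hilbert_space sm ip" and Bc: "comm_op_algebra sm ip B"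
    and RB: "\<forall>k<N. \<forall>i<n k. \<forall>j<n k. R k i j \<in> B" and s: "s > 0"
    and ge: "\<forall>k<N. opmat_ge_scalar ip (n k) (opmat_add (R k) (opmat_adj ip (R k))) s"
    unfolding class_A_def by blast
  interpret hs sm ip by (rule hs.intro[OF H])
  have nex: "\<not> koszul_exact lex3 (idx_set N n) (\<lambda>j x. flat_family R j x - sm (z j) x)"
    using z unfolding taylor_spectrum_def by blast
  show "Pi_mat (n k) (\<lambda>i j. z (k, i, j))"
  proof (rule ccontr)
    assume "\<not> Pi_mat (n k) (\<lambda>i j. z (k, i, j))"
    then obtain v where v: "\<exists>i<n k. v i \<noteq> 0"
      and neg: "\<not> Re (\<Sum>i<n k. \<Sum>j<n k. cnj (v i) * (z (k,i,j) + cnj (z (k,j,i))) * v j) > 0"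
      unfolding Pi_mat_def by blast
    have "koszul_exact lex3 (idx_set N n) (\<lambda>j x. flat_family R j x - sm (z j) x)"
      by (rule exact_if_not_Pi[OF k Bc RB s ge[rule_format, OF k] v]) (use neg in simp)
    then show False using nex by blast
  qed
qed


end
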